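(* Let $a,b,c\in\mathbb{R}$ be such that $$B=\begin{pmatrix}1&a&b\\ a&1&c\\ b&c&1\end{pmatrix}$$ is positive semidefinite. Put $$c_-=ab-\sqrt{(1-a^2)(1-b^2)},\qquad c_+=ab+\sqrt{(1-a^2)(1-b^2)},$$ $$\Delta_{a,b}=\max\{\sqrt{1-c_-^2},\sqrt{1-c_+^2}\},\qquad \delta_{a,b}=\min\{\sqrt{1-c_-^2},\sqrt{1-c_+^2}\}.$$ (i) If $f$ is a function on $[c_-,c_+]$ with $\delta_{a,b}\le f(x)$ for all $x\in[c_-,c_+]$, then $|a^2-b^2|\le\Delta_{a,b}f(x)$ for all $x\in[c_-,c_+]$. In particular, $|a^2-b^2|\le\Delta_{a,b}\sqrt{1-c^2}$. (ii) If $g$ is a function on $[c_-,c_+]$ with $\sqrt{1-c_+}\le g(x)$ for all $x\in[c_-,c_+]$, then $|a-b|\le\sqrt{1-c_-}\,g(x)$ for all $x\in[c_-,c_+]$. In particular, $|a-b|\le\sqrt{1-c_-}\,\sqrt{1-c}$. (iii) If moreover $a,b,c\in[0,1]$, then $|a-b|\le\sqrt{1-c^2}$. *)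

theory Defs
  imports "HOL-Analysis.Analysis"
begin

definition psd_matrix :: "real^'n^'n \<Rightarrow> bool" where
  "psd_matrix M \<longleftrightarrow> transpose M = M \<and> (\<forall>x. 0 \<le> x \<bullet> (M *v x))"

definition Bmat :: "real \<Rightarrow> real \<Rightarrow> real \<Rightarrow> real^3^3" where
  "Bmat a b c = vector [vector [1, a, b], vector [a, 1, c], vector [b, c, 1]]"

definition c_minus :: "real \<Rightarrow> real \<Rightarrow> real" where
  "c_minus a b = a * b - sqrt ((1 - a^2) * (1 - b^2))"

definition c_plus :: "real \<Rightarrow> real \<Rightarrow> real" where
  "c_plus a b = a * b + sqrt ((1 - a^2) * (1 - b^2))"

definition Delta_ab :: "real \<Rightarrow> real \<Rightarrow> real" where
  "Delta_ab a b = max (sqrt (1 - (c_minus a b)^2)) (sqrt (1 - (c_plus a b)^2))"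

definition delta_ab :: "real \<Rightarrow> real \<Rightarrow> real" where
  "delta_ab a b = min (sqrt (1 - (c_minus a b)^2)) (sqrt (1 - (c_plus a b)^2))"

end

theory Submission
  imports Defs
begin

lemma Qform:
  assumes "psd_matrix (Bmat a b c)"
  shows "0 \<le> p*p + q*q + r*r + 2*a*p*q + 2*b*p*r + 2*c*q*r"
proof -
  have "0 \<le> (vector [p,q,r] :: real^3) \<bullet> (Bmat a b c *v vector [p,q,r])"
    using assms unfolding psd_matrix_def by blast
  also have "\<dots> = p*p + q*q + r*r + 2*a*p*q + 2*b*p*r + 2*c*q*r"
    by (simp add: Bmat_def inner_vec_def sum_3 matrix_vector_mult_def algebra_simps)
  finally show ?thesis .
qed

lemma psd_facts:
  assumes "psd_matrix (Bmat a b c)"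
  shows "a^2 \<le> 1" "b^2 \<le> 1" "(c - a*b)^2 \<le> (1-a^2)*(1-b^2)"
proof -
  note Q = Qform[OF assms]
  show A: "a^2 \<le> 1" using Q[of 1 "-a" 0] by (simp add: power2_eq_square)
  show "b^2 \<le> 1" using Q[of 1 0 "-b"] by (simp add: power2_eq_square)
  have D: "(1-a^2)*(1-b^2) - (c-a*b)^2 = (1-a^2)*(1-c^2) - (b-a*c)^2"
    by (simp add: algebra_simps power2_eq_square)
  have E: "(b-a*c)^2 \<le> 1 - a^2"
    using Q[of 1 "-a" "a*c-b"] by (simp add: power2_eq_square algebra_simps)
  show "(c - a*b)^2 \<le> (1-a^2)*(1-b^2)"
  proof (cases "a^2 = 1")
    case True
    then have "(b-a*c)^2 = 0" using E by (metis diff_self order_antisym zero_le_power2)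
    then show ?thesis using True D by simp
  next
    case False
    then have pos: "0 < 1 - a^2" using A by simp
    have "0 \<le> (1-a^2) * ((1-a^2)*(1-c^2) - (b-a*c)^2)"
      using Q[of "a*c-b" "a*b-c" "1-a^2"] by (simp add: power2_eq_square algebra_simps)
    then have "0 \<le> (1-a^2)*(1-c^2) - (b-a*c)^2" using pos
      by (simp add: zero_le_mult_iff)
    then show ?thesis using D by simp
  qed
qed

theorem theorem2:
  fixes a b c :: real
  assumes psd: "psd_matrix (Bmat a b c)"
  shows
    "(\<forall>f :: real \<Rightarrow> real.
        (\<forall>x\<in>{c_minus a b..c_plus a b}. delta_ab a b \<le> f x) \<longrightarrow>
        (\<forall>x\<in>{c_minus a b..c_plus a b}. \<bar>a^2 - b^2\<bar> \<le> Delta_ab a b * f x))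
     \<and> \<bar>a^2 - b^2\<bar> \<le> Delta_ab a b * sqrt (1 - c^2)
     \<and> (\<forall>g :: real \<Rightarrow> real.
        (\<forall>x\<in>{c_minus a b..c_plus a b}. sqrt (1 - c_plus a b) \<le> g x) \<longrightarrow>
        (\<forall>x\<in>{c_minus a b..c_plus a b}. \<bar>a - b\<bar> \<le> sqrt (1 - c_minus a b) * g x))
     \<and> \<bar>a - b\<bar> \<le> sqrt (1 - c_minus a b) * sqrt (1 - c)
     \<and> (a \<in> {0..1} \<and> b \<in> {0..1} \<and> c \<in> {0..1} \<longrightarrow> \<bar>a - b\<bar> \<le> sqrt (1 - c^2))"
proof -
  note F = psd_facts[OF psd]
  define s where "s = sqrt ((1 - a^2) * (1 - b^2))"
  define cm where "cm = c_minus a b"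
  define cp where "cp = c_plus a b"
  have cm: "cm = a*b - s" and cp: "cp = a*b + s"
    by (simp_all add: cm_def cp_def s_def c_minus_def c_plus_def)
  have P: "0 \<le> (1 - a^2) * (1 - b^2)" using F by simp
  have s0: "0 \<le> s" using P by (simp add: s_def)
  have s2: "s^2 = (1 - a^2) * (1 - b^2)" using P by (simp add: s_def)
  have "\<bar>c - a*b\<bar> \<le> s" unfolding s_def
    using real_sqrt_le_mono[OF F(3)] by simp
  then have cin: "cm \<le> c" "c \<le> cp" using cm cp by auto
  have a1: "\<bar>a\<bar> \<le> 1" and b1: "\<bar>b\<bar> \<le> 1" using F abs_square_le_1 by auto
  have ab: "\<bar>a*b\<bar> \<le> 1" using a1 b1 by (metis abs_ge_zero abs_mult mult_le_one)
  then have ab1: "a*b \<le> 1" "-1 \<le> a*b" by (simp_all add: abs_le_iff)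
  have e1: "(1 - a*b)^2 - s^2 = (a-b)^2" using s2 by (simp add: power2_eq_square algebra_simps)
  have "s \<le> 1 - a*b"
    by (rule power2_le_imp_le) (use e1 ab1 zero_le_power2[of "a-b"] in \<open>linarith\<close>)+
  then have cp1: "cp \<le> 1" using cp by simp
  have e2: "(1 + a*b)^2 - s^2 = (a+b)^2" using s2 by (simp add: power2_eq_square algebra_simps)
  have "s \<le> 1 + a*b"
    by (rule power2_le_imp_le) (use e2 ab1 zero_le_power2[of "a+b"] in \<open>linarith\<close>)+
  then have cm1: "-1 \<le> cm" using cm by simp
  have cmcp: "cm \<le> cp" using s0 cm cp by simp
  have "\<bar>cm\<bar> \<le> 1" using cm1 cmcp cp1 by simp
  then have Pm: "0 \<le> 1 - cm^2" by (simp add: abs_square_le_1)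
  have "\<bar>cp\<bar> \<le> 1" using cm1 cmcp cp1 by simp
  then have Pp: "0 \<le> 1 - cp^2" by (simp add: abs_square_le_1)
  have prod: "(1 - cm^2) * (1 - cp^2) = (a^2 - b^2)^2"
  proof -
    have m: "cm * cp = a^2 + b^2 - 1" unfolding cm cp using s2 by (simp add: power2_eq_square algebra_simps)
    have q: "cm^2 + cp^2 = 2 * (a^2 * b^2) + 2 * (s^2)" unfolding cm cp by (simp add: power2_eq_square algebra_simps)
    have "(1 - cm^2) * (1 - cp^2) = 1 - (cm^2 + cp^2) + (cm*cp)^2" by (simp add: power2_eq_square algebra_simps)
    also have "\<dots> = (a^2 - b^2)^2" unfolding m q s2 by (simp add: power2_eq_square algebra_simps)
    finally show ?thesis .
  qed
  have Dd: "Delta_ab a b * delta_ab a b = \<bar>a^2 - b^2\<bar>"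
  proof -
    have "Delta_ab a b * delta_ab a b = sqrt (1 - cm^2) * sqrt (1 - cp^2)"
      unfolding Delta_ab_def delta_ab_def cm_def[symmetric] cp_def[symmetric]
      by (cases "sqrt (1 - cm^2) \<le> sqrt (1 - cp^2)") (auto simp: max_def min_def)
    also have "\<dots> = sqrt ((a^2 - b^2)^2)" using prod by (simp add: real_sqrt_mult[symmetric])
    finally show ?thesis by simp
  qed
  have D0: "0 \<le> Delta_ab a b" using Pm unfolding Delta_ab_def cm_def by (simp add: le_max_iff_disj)
  have prod2: "(1 - cm) * (1 - cp) = (a - b)^2"
    unfolding cm cp using s2 by (simp add: power2_eq_square algebra_simps)
  have sq2: "sqrt (1 - cm) * sqrt (1 - cp) = \<bar>a - b\<bar>"
    using prod2 by (simp add: real_sqrt_mult[symmetric])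
  have sm0: "0 \<le> sqrt (1 - cm)" using cmcp cp1 by simp
  have part1: "\<forall>f :: real \<Rightarrow> real.
        (\<forall>x\<in>{c_minus a b..c_plus a b}. delta_ab a b \<le> f x) \<longrightarrow>
        (\<forall>x\<in>{c_minus a b..c_plus a b}. \<bar>a^2 - b^2\<bar> \<le> Delta_ab a b * f x)"
    using Dd D0 by (metis mult_left_mono)
  have dle: "delta_ab a b \<le> sqrt (1 - c^2)"
  proof -
    have "min (1 - cm^2) (1 - cp^2) \<le> 1 - c^2"
    proof (cases "0 \<le> c")
      case True
      then have "c^2 \<le> cp^2" using cin by (simp add: power_mono)
      then show ?thesis by simp
    next
      case False
      then have "(-c)^2 \<le> (-cm)^2" using cin by (intro power_mono) auto
      then have "c^2 \<le> cm^2" by simp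
      then show ?thesis by simp
    qed
    then have "sqrt (min (1 - cm^2) (1 - cp^2)) \<le> sqrt (1 - c^2)" by simp
    moreover have "sqrt (min (1 - cm^2) (1 - cp^2)) = delta_ab a b"
      unfolding delta_ab_def cm_def[symmetric] cp_def[symmetric]
      by (simp add: min_def)
    ultimately show ?thesis by simp
  qed
  have part2: "\<bar>a^2 - b^2\<bar> \<le> Delta_ab a b * sqrt (1 - c^2)"
    using Dd D0 dle by (metis mult_left_mono)
  have part3: "\<forall>g :: real \<Rightarrow> real.
        (\<forall>x\<in>{c_minus a b..c_plus a b}. sqrt (1 - c_plus a b) \<le> g x) \<longrightarrow>
        (\<forall>x\<in>{c_minus a b..c_plus a b}. \<bar>a - b\<bar> \<le> sqrt (1 - c_minus a b) * g x)"
    using sq2 sm0 unfolding cm_def cp_def by (metis mult_left_mono)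
  have part4: "\<bar>a - b\<bar> \<le> sqrt (1 - c_minus a b) * sqrt (1 - c)"
  proof -
    have "sqrt (1 - cp) \<le> sqrt (1 - c)" using cin by simp
    then show ?thesis using sq2 sm0 unfolding cm_def by (metis mult_left_mono)
  qed
  have part5: "a \<in> {0..1} \<and> b \<in> {0..1} \<and> c \<in> {0..1} \<longrightarrow> \<bar>a - b\<bar> \<le> sqrt (1 - c^2)"
  proof
    assume H: "a \<in> {0..1} \<and> b \<in> {0..1} \<and> c \<in> {0..1}"
    have e: "1 - cp^2 - (a-b)^2 = 2*a*b*(1 - cp)"
      unfolding cp using s2 by (simp add: power2_eq_square algebra_simps)
    have "0 \<le> 2*a*b*(1 - cp)" using H cp1 by simp
    then have "(a-b)^2 \<le> 1 - cp^2" using e by simp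
    also have "\<dots> \<le> 1 - c^2" using H cin by (simp add: power_mono)
    finally have "sqrt ((a-b)^2) \<le> sqrt (1 - c^2)" by (rule real_sqrt_le_mono)
    then show "\<bar>a - b\<bar> \<le> sqrt (1 - c^2)" by simp
  qed
  show ?thesis using part1 part2 part3 part4 part5 by blast
qed

end
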